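(* Let $\mathsf G$ be a group having a non-trivial outer automorphism class $[\varphi]\in\mathsf{Out}(\mathsf G)$ such that (1) $[\varphi]^2=[id_{\mathsf G}]$ in $\mathsf{Out}(\mathsf G)$, and (2) for every automorphism $\phi\in[\varphi]$ and every $g\in\mathsf G$ with $\phi^2=c_g$, one has $\phi(g)\neq g$. Then $\mathbb{S}ym(\mathsf G)$ is not split (i.e. $\mathsf G$ is not permutationally split).
   Context: $c_g$ denotes the inner automorphism $h\mapsto ghg^{-1}$; $\mathsf{Out}(\mathsf G)=\mathsf{Aut}(\mathsf G)/\mathsf{Inn}(\mathsf G)$. $\mathsf G$ is regarded as a one-object groupoid, and $\mathbb{S}ym(\mathsf G)$ is the 2-group of self-equivalences of this groupoid and natural isomorphisms, with tensor product composition (equivalently: objects the automorphisms $\phi$ of $\mathsf G$, morphisms $\phi\to\tilde\phi$ the elements $g$ with $\tilde\phi=c_g\circ\phi$). A 2-group is split if it is equivalent (monoidal functor with pseudo-inverse up to monoidal natural isomorphism) to an elementary 2-group $\mathsf A[1]\rtimes\mathsf H[0]$ for some group $\mathsf H$ and left $\mathsf H$-module $\mathsf A$: the strict 2-group with objects the elements of $\mathsf H$, morphisms $(a,h):h\to h$, composition $(a',h)\circ(a,h)=(a'+a,h)$, tensor $h\otimes h'=hh'$, $(a,h)\otimes(a',h')=(a+h\lhd a',hh')$. $\mathsf G$ is permutationally split if $\mathbb{S}ym(\mathsf G)$ is split. *)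

theory Defs
  imports "HOL-Algebra.Algebra"
begin

text \<open>Both Sym(G) and the elementary 2-groups A[1] \<rtimes> H[0] are strict monoidal
  categories (associator and unitors are identities).  We represent such a category
  by carriers of objects and morphisms together with its structure maps.
  cmp g f denotes g \<circ> f (first f, then g).\<close>

record ('o, 'm) mcat =
  obj   :: "'o set"
  mor   :: "'m set"
  src   :: "'m \<Rightarrow> 'o"
  tgt   :: "'m \<Rightarrow> 'o"
  idm   :: "'o \<Rightarrow> 'm"
  cmp   :: "'m \<Rightarrow> 'm \<Rightarrow> 'm"
  otens :: "'o \<Rightarrow> 'o \<Rightarrow> 'o"
  mtens :: "'m \<Rightarrow> 'm \<Rightarrow> 'm"
  unit  :: "'o"

definition in_hom :: "('o, 'm) mcat \<Rightarrow> 'm \<Rightarrow> 'o \<Rightarrow> 'o \<Rightarrow> bool" where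
  "in_hom C f x y \<longleftrightarrow> f \<in> mor C \<and> src C f = x \<and> tgt C f = y"

definition iso_in :: "('o, 'm) mcat \<Rightarrow> 'm \<Rightarrow> 'o \<Rightarrow> 'o \<Rightarrow> bool" where
  "iso_in C f x y \<longleftrightarrow> in_hom C f x y \<and>
     (\<exists>g. in_hom C g y x \<and> cmp C g f = idm C x \<and> cmp C f g = idm C y)"

record ('o1, 'm1, 'o2, 'm2) mfun =
  fo  :: "'o1 \<Rightarrow> 'o2"
  fm  :: "'m1 \<Rightarrow> 'm2"
  mu  :: "'o1 \<Rightarrow> 'o1 \<Rightarrow> 'm2"
  eps :: "'m2"

definition monoidal_functor ::
  "('o1, 'm1) mcat \<Rightarrow> ('o2, 'm2) mcat \<Rightarrow> ('o1, 'm1, 'o2, 'm2) mfun \<Rightarrow> bool" where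
  "monoidal_functor C D F \<longleftrightarrow>
     (\<forall>x\<in>obj C. fo F x \<in> obj D) \<and>
     (\<forall>f\<in>mor C. in_hom D (fm F f) (fo F (src C f)) (fo F (tgt C f))) \<and>
     (\<forall>x\<in>obj C. fm F (idm C x) = idm D (fo F x)) \<and>
     (\<forall>f\<in>mor C. \<forall>g\<in>mor C. src C g = tgt C f \<longrightarrow>
         fm F (cmp C g f) = cmp D (fm F g) (fm F f)) \<and>
     (\<forall>x\<in>obj C. \<forall>y\<in>obj C.
         iso_in D (mu F x y) (otens D (fo F x) (fo F y)) (fo F (otens C x y))) \<and>
     iso_in D (eps F) (unit D) (fo F (unit C)) \<and>
     (\<forall>f\<in>mor C. \<forall>g\<in>mor C.
         cmp D (mu F (tgt C f) (tgt C g)) (mtens D (fm F f) (fm F g))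
       = cmp D (fm F (mtens C f g)) (mu F (src C f) (src C g))) \<and>
     (\<forall>x\<in>obj C. \<forall>y\<in>obj C. \<forall>z\<in>obj C.
         cmp D (mu F (otens C x y) z) (mtens D (mu F x y) (idm D (fo F z)))
       = cmp D (mu F x (otens C y z)) (mtens D (idm D (fo F x)) (mu F y z))) \<and>
     (\<forall>x\<in>obj C. cmp D (mu F (unit C) x) (mtens D (eps F) (idm D (fo F x))) = idm D (fo F x)) \<and>
     (\<forall>x\<in>obj C. cmp D (mu F x (unit C)) (mtens D (idm D (fo F x)) (eps F)) = idm D (fo F x))"

definition monoidal_nat_iso ::
  "('o1, 'm1) mcat \<Rightarrow> ('o2, 'm2) mcat \<Rightarrow> ('o1, 'm1, 'o2, 'm2) mfun
     \<Rightarrow> ('o1, 'm1, 'o2, 'm2) mfun \<Rightarrow> ('o1 \<Rightarrow> 'm2) \<Rightarrow> bool" where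
  "monoidal_nat_iso C D F F' \<theta> \<longleftrightarrow>
     (\<forall>x\<in>obj C. iso_in D (\<theta> x) (fo F x) (fo F' x)) \<and>
     (\<forall>f\<in>mor C. cmp D (\<theta> (tgt C f)) (fm F f) = cmp D (fm F' f) (\<theta> (src C f))) \<and>
     (\<forall>x\<in>obj C. \<forall>y\<in>obj C.
         cmp D (\<theta> (otens C x y)) (mu F x y) = cmp D (mu F' x y) (mtens D (\<theta> x) (\<theta> y))) \<and>
     cmp D (\<theta> (unit C)) (eps F) = eps F'"

definition mf_comp ::
  "('o3, 'm3) mcat \<Rightarrow> ('o2, 'm2, 'o3, 'm3) mfun \<Rightarrow> ('o1, 'm1, 'o2, 'm2) mfun
     \<Rightarrow> ('o1, 'm1, 'o3, 'm3) mfun" where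
  "mf_comp E G F =
     \<lparr> fo = fo G \<circ> fo F,
       fm = fm G \<circ> fm F,
       mu = (\<lambda>x y. cmp E (fm G (mu F x y)) (mu G (fo F x) (fo F y))),
       eps = cmp E (fm G (eps F)) (eps G) \<rparr>"

definition mf_id :: "('o, 'm) mcat \<Rightarrow> ('o, 'm, 'o, 'm) mfun" where
  "mf_id C = \<lparr> fo = id, fm = id, mu = (\<lambda>x y. idm C (otens C x y)), eps = idm C (unit C) \<rparr>"

definition equivalent_2grp :: "('o1, 'm1) mcat \<Rightarrow> ('o2, 'm2) mcat \<Rightarrow> bool" where
  "equivalent_2grp C D \<longleftrightarrow>
     (\<exists>F G \<theta> \<eta>. monoidal_functor C D F \<and> monoidal_functor D C G \<and>
        monoidal_nat_iso C C (mf_comp C G F) (mf_id C) \<theta> \<and>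
        monoidal_nat_iso D D (mf_comp D F G) (mf_id D) \<eta>)"

definition inn :: "('g, 'b) monoid_scheme \<Rightarrow> 'g \<Rightarrow> ('g \<Rightarrow> 'g)" where
  "inn G g = (\<lambda>h\<in>carrier G. g \<otimes>\<^bsub>G\<^esub> h \<otimes>\<^bsub>G\<^esub> inv\<^bsub>G\<^esub> g)"

text \<open>Objects: automorphisms \<phi>; a morphism \<phi> \<rightarrow> c_g \<circ> \<phi> is represented by the pair (g, \<phi>).
  Composition (g', c_g \<phi>) \<circ> (g, \<phi>) = (g' g, \<phi>); tensor = composition of automorphisms,
  (g,\<phi>) \<otimes> (h,\<psi>) = (g \<phi>(h), \<phi>\<psi>) (horizontal composition of natural isomorphisms).\<close>

definition SymG :: "('g, 'b) monoid_scheme \<Rightarrow> ('g \<Rightarrow> 'g, 'g \<times> ('g \<Rightarrow> 'g)) mcat" where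
  "SymG G =
     \<lparr> obj = auto G,
       mor = carrier G \<times> auto G,
       src = snd,
       tgt = (\<lambda>(g, \<phi>). compose (carrier G) (inn G g) \<phi>),
       idm = (\<lambda>\<phi>. (\<one>\<^bsub>G\<^esub>, \<phi>)),
       cmp = (\<lambda>(g', _) (g, \<phi>). (g' \<otimes>\<^bsub>G\<^esub> g, \<phi>)),
       otens = compose (carrier G),
       mtens = (\<lambda>(g, \<phi>) (h, \<psi>). (g \<otimes>\<^bsub>G\<^esub> \<phi> h, compose (carrier G) \<phi> \<psi>)),
       unit = (\<lambda>x\<in>carrier G. x) \<rparr>"

definition left_module :: "('h, 'c) monoid_scheme \<Rightarrow> ('a, 'd) monoid_scheme \<Rightarrow> ('h \<Rightarrow> 'a \<Rightarrow> 'a) \<Rightarrow> bool" where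
  "left_module H A act \<longleftrightarrow> group H \<and> comm_group A \<and> group_hom H (AutoGroup A) act"

definition elem2 :: "('h, 'c) monoid_scheme \<Rightarrow> ('a, 'd) monoid_scheme \<Rightarrow> ('h \<Rightarrow> 'a \<Rightarrow> 'a)
                     \<Rightarrow> ('h, 'a \<times> 'h) mcat" where
  "elem2 H A act =
     \<lparr> obj = carrier H,
       mor = carrier A \<times> carrier H,
       src = snd,
       tgt = snd,
       idm = (\<lambda>h. (\<one>\<^bsub>A\<^esub>, h)),
       cmp = (\<lambda>(a', _) (a, h). (a' \<otimes>\<^bsub>A\<^esub> a, h)),
       otens = (\<lambda>h h'. h \<otimes>\<^bsub>H\<^esub> h'),
       mtens = (\<lambda>(a, h) (a', h'). (a \<otimes>\<^bsub>A\<^esub> act h a', h \<otimes>\<^bsub>H\<^esub> h')),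
       unit = \<one>\<^bsub>H\<^esub> \<rparr>"

end

theory Submission
  imports Defs
begin

lemma auto_compose:
  assumes "group G" "f \<in> auto G" "g \<in> auto G"
  shows "compose (carrier G) f g \<in> auto G"
  using assms
  by (auto simp add: auto_def Bij_imp_funcset group.hom_compose compose_Bij)

lemma auto_mem:
  assumes "f \<in> auto G" "x \<in> carrier G" shows "f x \<in> carrier G"
  using assms by (auto simp: auto_def hom_def)

lemma auto_hom:
  assumes "f \<in> auto G" "x \<in> carrier G" "y \<in> carrier G"
  shows "f (x \<otimes>\<^bsub>G\<^esub> y) = f x \<otimes>\<^bsub>G\<^esub> f y"
  using assms by (auto simp: auto_def hom_def)

lemma auto_one:
  assumes "group G" "f \<in> auto G" shows "f \<one>\<^bsub>G\<^esub> = \<one>\<^bsub>G\<^esub>"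
  using assms by (metis auto_def IntD1 group.axioms(1) group.axioms(1) group_hom.hom_one group_hom.intro group_hom_axioms.intro)

lemma auto_inv:
  assumes "group G" "f \<in> auto G" "x \<in> carrier G" shows "f (inv\<^bsub>G\<^esub> x) = inv\<^bsub>G\<^esub> (f x)"
  using assms by (metis auto_def IntD1 group_hom.hom_inv group_hom.intro group_hom_axioms.intro)

lemma (in group) inv_cancel_l [simp]:
  "a \<in> carrier G \<Longrightarrow> b \<in> carrier G \<Longrightarrow> inv a \<otimes> (a \<otimes> b) = b"
  by (simp add: m_assoc[symmetric])

lemma (in group) inv_cancel_l' [simp]:
  "a \<in> carrier G \<Longrightarrow> b \<in> carrier G \<Longrightarrow> a \<otimes> (inv a \<otimes> b) = b"
  by (simp add: m_assoc[symmetric])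

lemma auto_ext:
  assumes "f \<in> auto G" shows "f \<in> extensional (carrier G)"
  using assms by (auto simp: auto_def Bij_def)

theorem corollary4p23:
  fixes G :: "'g monoid" and \<phi> :: "'g \<Rightarrow> 'g"
  assumes "group G"
    and "\<phi> \<in> auto G"
    and nontrivial: "\<not> (\<exists>g\<in>carrier G. \<phi> = inn G g)"
    and square_inner: "\<exists>g\<in>carrier G. compose (carrier G) \<phi> \<phi> = inn G g"
    and no_fixed: "\<And>k g. k \<in> carrier G \<Longrightarrow> g \<in> carrier G \<Longrightarrow>
        compose (carrier G) (compose (carrier G) (inn G k) \<phi>) (compose (carrier G) (inn G k) \<phi>) = inn G g \<Longrightarrow>
        (compose (carrier G) (inn G k) \<phi>) g \<noteq> g"
  shows "\<not> (\<exists>(H :: 'h monoid) (A :: 'a monoid) act.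
              left_module H A act \<and> equivalent_2grp (SymG G) (elem2 H A act))"
proof
  assume "\<exists>(H :: 'h monoid) (A :: 'a monoid) act.
              left_module H A act \<and> equivalent_2grp (SymG G) (elem2 H A act)"
  then obtain H :: "'h monoid" and A :: "'a monoid" and act where
    eq: "equivalent_2grp (SymG G) (elem2 H A act)" by blast
  define C where "C = SymG G"
  define D where "D = elem2 H A act"
  from eq obtain F G' \<theta> \<eta> where
    MF: "monoidal_functor C D F" and MG: "monoidal_functor D C G'" and
    T: "monoidal_nat_iso C C (mf_comp C G' F) (mf_id C) \<theta>"
    unfolding equivalent_2grp_def C_def D_def by blast
  interpret group G by fact
  have objC: "obj C = auto G" and morC: "mor C = carrier G \<times> auto G"
    and srcC: "src C = snd" and unitC: "unit C = (\<lambda>x\<in>carrier G. x)"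
    and otC: "otens C = compose (carrier G)"
    and tgtC: "\<And>g f. tgt C (g, f) = compose (carrier G) (inn G g) f"
    and cmpC: "\<And>g' f' g f. cmp C (g', f') (g, f) = (g' \<otimes>\<^bsub>G\<^esub> g, f)"
    and mtC: "\<And>g f g' f'. mtens C (g, f) (g', f') = (g \<otimes>\<^bsub>G\<^esub> f g', compose (carrier G) f f')"
    and idmC: "\<And>f. idm C f = (\<one>\<^bsub>G\<^esub>, f)"
    by (simp_all add: C_def SymG_def)
  have objD: "obj D = carrier H" and srcD: "src D = snd" and tgtD: "tgt D = snd"
    and otD: "\<And>x y. otens D x y = x \<otimes>\<^bsub>H\<^esub> y" and unitD: "unit D = \<one>\<^bsub>H\<^esub>"
    by (simp_all add: D_def elem2_def)
  obtain g0 where g0: "g0 \<in> carrier G" "compose (carrier G) \<phi> \<phi> = inn G g0"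
    using square_inner by blast
  have phiphi: "compose (carrier G) \<phi> \<phi> \<in> auto G"
    using auto_compose assms(1,2) by blast
  define h where "h = fo F \<phi>"
  have hH: "h \<in> carrier H" using MF assms(2) objC objD
    unfolding monoidal_functor_def h_def by auto
  have "iso_in D (mu F \<phi> \<phi>) (otens D h h) (fo F (otens C \<phi> \<phi>))"
    using MF assms(2) objC unfolding monoidal_functor_def h_def by auto
  hence e1: "h \<otimes>\<^bsub>H\<^esub> h = fo F (compose (carrier G) \<phi> \<phi>)"
    by (auto simp: iso_in_def in_hom_def srcD tgtD otD otC)
  have innid: "compose (carrier G) (inn G (inv\<^bsub>G\<^esub> g0)) (inn G g0) = (\<lambda>x\<in>carrier G. x)"
  proof
    fix x show "compose (carrier G) (inn G (inv\<^bsub>G\<^esub> g0)) (inn G g0) x = (\<lambda>x\<in>carrier G. x) x"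
      using g0(1) by (cases "x \<in> carrier G") (simp_all add: compose_def inn_def m_assoc)
  qed
  have f0: "(inv\<^bsub>G\<^esub> g0, compose (carrier G) \<phi> \<phi>) \<in> mor C" using morC phiphi g0 by auto
  hence "in_hom D (fm F (inv\<^bsub>G\<^esub> g0, compose (carrier G) \<phi> \<phi>)) (fo F (compose (carrier G) \<phi> \<phi>))
          (fo F (unit C))"
    using MF unfolding monoidal_functor_def by (auto simp: srcC tgtC g0 innid unitC)
  hence e2: "fo F (compose (carrier G) \<phi> \<phi>) = fo F (unit C)"
    by (auto simp: in_hom_def srcD tgtD)
  have "iso_in D (eps F) (unit D) (fo F (unit C))"
    using MF unfolding monoidal_functor_def by auto
  hence e3: "\<one>\<^bsub>H\<^esub> = fo F (unit C)" by (auto simp: iso_in_def in_hom_def srcD tgtD unitD)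
  have hh: "h \<otimes>\<^bsub>H\<^esub> h = \<one>\<^bsub>H\<^esub>" using e1 e2 e3 by simp

  define \<psi> where "\<psi> = fo G' h"
  have MGa: "\<forall>x\<in>obj D. \<forall>y\<in>obj D. \<forall>z\<in>obj D.
         cmp C (mu G' (otens D x y) z) (mtens C (mu G' x y) (idm C (fo G' z)))
       = cmp C (mu G' x (otens D y z)) (mtens C (idm C (fo G' x)) (mu G' y z))"
    using MG unfolding monoidal_functor_def by (elim conjE) assumption
  have MGl: "\<forall>x\<in>obj D. cmp C (mu G' (unit D) x) (mtens C (eps G') (idm C (fo G' x))) = idm C (fo G' x)"
    using MG unfolding monoidal_functor_def by (elim conjE) assumption
  have MGr: "\<forall>x\<in>obj D. cmp C (mu G' x (unit D)) (mtens C (idm C (fo G' x)) (eps G')) = idm C (fo G' x)"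
    using MG unfolding monoidal_functor_def by (elim conjE) assumption
  have MGm: "\<forall>x\<in>obj D. \<forall>y\<in>obj D.
         iso_in C (mu G' x y) (otens C (fo G' x) (fo G' y)) (fo G' (otens D x y))"
    using MG unfolding monoidal_functor_def by (elim conjE) assumption
  have MGe: "iso_in C (eps G') (unit C) (fo G' (unit D))"
    using MG unfolding monoidal_functor_def by (elim conjE) assumption
  have MGo: "\<forall>x\<in>obj D. fo G' x \<in> obj C"
    using MG unfolding monoidal_functor_def by (elim conjE) assumption
  have psiA: "\<psi> \<in> auto G" using MGo hH objC objD
    unfolding \<psi>_def by auto
  have psipsi: "compose (carrier G) \<psi> \<psi> \<in> auto G"
    using auto_compose assms(1) psiA by blast
  have "iso_in C (mu G' h h) (otens C \<psi> \<psi>) (fo G' (otens D h h))"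
    using MGm hH objD unfolding \<psi>_def by auto
  hence Min: "in_hom C (mu G' h h) (compose (carrier G) \<psi> \<psi>) (fo G' \<one>\<^bsub>H\<^esub>)"
    by (simp add: iso_in_def otC otD hh)
  obtain m Ms where Mdef: "mu G' h h = (m, Ms)" by fastforce
  from Min have mG: "m \<in> carrier G" and Ms: "Ms = compose (carrier G) \<psi> \<psi>"
    and Mt: "compose (carrier G) (inn G m) Ms = fo G' \<one>\<^bsub>H\<^esub>"
    by (auto simp: in_hom_def Mdef morC srcC tgtC)
  have "iso_in C (eps G') (unit C) (fo G' (unit D))"
    using MGe by auto
  hence Ein: "in_hom C (eps G') (\<lambda>x\<in>carrier G. x) (fo G' \<one>\<^bsub>H\<^esub>)"
    by (simp add: iso_in_def unitC unitD)
  obtain e Es where Edef: "eps G' = (e, Es)" by fastforce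
  from Ein have eG: "e \<in> carrier G" and Es: "Es = (\<lambda>x\<in>carrier G. x)"
    and Et: "compose (carrier G) (inn G e) (\<lambda>x\<in>carrier G. x) = fo G' \<one>\<^bsub>H\<^esub>"
    by (auto simp: in_hom_def Edef morC srcC tgtC)
  have oneH: "\<one>\<^bsub>H\<^esub> \<in> carrier H" using hH hh
  proof -
    have "unit C \<in> obj C" using unitC objC id_in_auto by simp
    thus ?thesis using MF e3 objD unfolding monoidal_functor_def by simp
  qed
  obtain u U where Udef: "mu G' \<one>\<^bsub>H\<^esub> h = (u, U)" by fastforce
  obtain v V where Vdef: "mu G' h \<one>\<^bsub>H\<^esub> = (v, V)" by fastforce
  have "iso_in C (mu G' \<one>\<^bsub>H\<^esub> h) (otens C (fo G' \<one>\<^bsub>H\<^esub>) \<psi>) (fo G' (otens D \<one>\<^bsub>H\<^esub> h))"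
    using MGm hH oneH objD unfolding \<psi>_def by auto
  hence uG: "u \<in> carrier G" by (auto simp: iso_in_def in_hom_def Udef morC)
  have "iso_in C (mu G' h \<one>\<^bsub>H\<^esub>) (otens C \<psi> (fo G' \<one>\<^bsub>H\<^esub>)) (fo G' (otens D h \<one>\<^bsub>H\<^esub>))"
    using MGm hH oneH objD unfolding \<psi>_def by auto
  hence vG: "v \<in> carrier G" by (auto simp: iso_in_def in_hom_def Vdef morC)
  have "cmp C (mu G' (unit D) h) (mtens C (eps G') (idm C (fo G' h))) = idm C (fo G' h)"
    using MGl MGr hH objD by auto
  hence ue: "u \<otimes>\<^bsub>G\<^esub> e = \<one>\<^bsub>G\<^esub>"
    using eG by (simp add: unitD Udef Edef mtC idmC cmpC Es)
  have "cmp C (mu G' h (unit D)) (mtens C (idm C (fo G' h)) (eps G')) = idm C (fo G' h)"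
    using MGl MGr hH objD by auto
  hence ve: "v \<otimes>\<^bsub>G\<^esub> (\<one>\<^bsub>G\<^esub> \<otimes>\<^bsub>G\<^esub> \<psi> e) = \<one>\<^bsub>G\<^esub>"
    using eG by (simp add: unitD Vdef Edef mtC idmC cmpC \<psi>_def)
  have "cmp C (mu G' (otens D h h) h) (mtens C (mu G' h h) (idm C (fo G' h)))
       = cmp C (mu G' h (otens D h h)) (mtens C (idm C (fo G' h)) (mu G' h h))"
    using MGa hH objD by blast
  hence uv: "u \<otimes>\<^bsub>G\<^esub> (m \<otimes>\<^bsub>G\<^esub> Ms \<one>\<^bsub>G\<^esub>) = v \<otimes>\<^bsub>G\<^esub> (\<one>\<^bsub>G\<^esub> \<otimes>\<^bsub>G\<^esub> \<psi> m)"
    by (simp add: otD hh Udef Vdef Mdef mtC idmC cmpC \<psi>_def)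
  have Ms1: "Ms \<one>\<^bsub>G\<^esub> = \<one>\<^bsub>G\<^esub>" using auto_one[OF assms(1) psipsi] Ms by simp
  have psie: "\<psi> e \<in> carrier G" "\<psi> m \<in> carrier G"
    using auto_mem[OF psiA eG] auto_mem[OF psiA mG] by auto
  define k where "k = inv\<^bsub>G\<^esub> e \<otimes>\<^bsub>G\<^esub> m"
  have kG: "k \<in> carrier G" using eG mG k_def by simp
  have u_eq: "u = inv\<^bsub>G\<^esub> e" using inv_equality[OF ue eG uG] by simp
  have ve': "v \<otimes>\<^bsub>G\<^esub> \<psi> e = \<one>\<^bsub>G\<^esub>" using ve psie(1) by simp
  have v_eq: "v = inv\<^bsub>G\<^esub> (\<psi> e)" using inv_equality[OF ve' psie(1) vG] by simp
  have uv': "u \<otimes>\<^bsub>G\<^esub> m = v \<otimes>\<^bsub>G\<^esub> \<psi> m" using uv Ms1 mG psie(2) by simp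
  have "\<psi> k = \<psi> (inv\<^bsub>G\<^esub> e) \<otimes>\<^bsub>G\<^esub> \<psi> m"
    unfolding k_def using auto_hom[OF psiA] eG mG by simp
  also have "\<dots> = v \<otimes>\<^bsub>G\<^esub> \<psi> m" using auto_inv[OF assms(1) psiA eG] v_eq by simp
  also have "\<dots> = k" using uv' u_eq k_def by simp
  finally have psik: "\<psi> k = k" .

  have MsA: "Ms \<in> auto G" using Ms psipsi by simp
  have Msk: "Ms = inn G (inv\<^bsub>G\<^esub> k)"
  proof
    fix x
    show "Ms x = inn G (inv\<^bsub>G\<^esub> k) x"
    proof (cases "x \<in> carrier G")
      case False
      thus ?thesis using auto_ext[OF MsA] by (simp add: inn_def extensional_def)
    next
      case True
      have y: "Ms x \<in> carrier G" using auto_mem[OF MsA True] .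
      have "compose (carrier G) (inn G m) Ms x = compose (carrier G) (inn G e) (\<lambda>x\<in>carrier G. x) x"
        using Mt Et by simp
      hence eqx: "m \<otimes>\<^bsub>G\<^esub> Ms x \<otimes>\<^bsub>G\<^esub> inv\<^bsub>G\<^esub> m = e \<otimes>\<^bsub>G\<^esub> x \<otimes>\<^bsub>G\<^esub> inv\<^bsub>G\<^esub> e"
        using True y by (simp add: compose_def inn_def)
      have "Ms x = inv\<^bsub>G\<^esub> m \<otimes>\<^bsub>G\<^esub> (m \<otimes>\<^bsub>G\<^esub> Ms x \<otimes>\<^bsub>G\<^esub> inv\<^bsub>G\<^esub> m) \<otimes>\<^bsub>G\<^esub> m"
        using y mG by (simp add: m_assoc)
      also have "\<dots> = inv\<^bsub>G\<^esub> m \<otimes>\<^bsub>G\<^esub> (e \<otimes>\<^bsub>G\<^esub> x \<otimes>\<^bsub>G\<^esub> inv\<^bsub>G\<^esub> e) \<otimes>\<^bsub>G\<^esub> m" using eqx by simp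
      also have "\<dots> = (inv\<^bsub>G\<^esub> m \<otimes>\<^bsub>G\<^esub> e) \<otimes>\<^bsub>G\<^esub> x \<otimes>\<^bsub>G\<^esub> inv\<^bsub>G\<^esub> (inv\<^bsub>G\<^esub> m \<otimes>\<^bsub>G\<^esub> e)"
        using mG eG True by (simp add: m_assoc inv_mult_group)
      also have "inv\<^bsub>G\<^esub> m \<otimes>\<^bsub>G\<^esub> e = inv\<^bsub>G\<^esub> k" using mG eG by (simp add: k_def inv_mult_group)
      finally show ?thesis using True kG by (simp add: inn_def)
    qed
  qed
  have "\<forall>x\<in>obj C. iso_in C (\<theta> x) (fo (mf_comp C G' F) x) (fo (mf_id C) x)"
    using T unfolding monoidal_nat_iso_def by (elim conjE)
  hence "iso_in C (\<theta> \<phi>) (\<psi>) \<phi>"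
    using assms(2) objC by (simp add: mf_comp_def mf_id_def \<psi>_def h_def)
  moreover obtain t Ts where Tdef: "\<theta> \<phi> = (t, Ts)" by fastforce
  ultimately have tG: "t \<in> carrier G" and Tt: "compose (carrier G) (inn G t) \<psi> = \<phi>"
    by (auto simp: iso_in_def in_hom_def morC srcC tgtC)
  define \<phi>' where "\<phi>' = compose (carrier G) (inn G (inv\<^bsub>G\<^esub> t)) \<phi>"
  have phi'psi: "\<phi>' = \<psi>"
  proof
    fix x
    show "\<phi>' x = \<psi> x"
    proof (cases "x \<in> carrier G")
      case False
      thus ?thesis using auto_ext[OF psiA] by (simp add: \<phi>'_def compose_def extensional_def)
    next
      case True
      have y: "\<psi> x \<in> carrier G" using auto_mem[OF psiA True] .
      have "\<phi> x = t \<otimes>\<^bsub>G\<^esub> \<psi> x \<otimes>\<^bsub>G\<^esub> inv\<^bsub>G\<^esub> t" using Tt[symmetric] True y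
        by (simp add: compose_def inn_def)
      thus ?thesis using True y tG auto_mem[OF assms(2) True]
        by (simp add: \<phi>'_def compose_def inn_def m_assoc)
    qed
  qed
  have invk: "inv\<^bsub>G\<^esub> k \<in> carrier G" using kG by simp
  have itG: "inv\<^bsub>G\<^esub> t \<in> carrier G" using tG by simp
  have sq: "compose (carrier G) \<phi>' \<phi>' = inn G (inv\<^bsub>G\<^esub> k)"
    using Ms Msk phi'psi by simp
  have "\<phi>' (inv\<^bsub>G\<^esub> k) \<noteq> inv\<^bsub>G\<^esub> k"
    using no_fixed[OF itG invk] sq unfolding \<phi>'_def by blast
  moreover have "\<phi>' (inv\<^bsub>G\<^esub> k) = inv\<^bsub>G\<^esub> k"
    using phi'psi psik kG by (simp add: auto_inv[OF assms(1) psiA])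
  ultimately show False by simp
qed

end
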